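(* Let $B\in\mathscr B$, let $r_B$ be as defined below, and let $H\colon\mathbb T^2\to\mathbb R$ be a Lipschitz function with $\nabla^\perp H=r_Bb$ $\mathscr L^2$-a.e. in $B$, where $\nabla^\perp=(-\partial_2,\partial_1)$. Let $t_1,t_2\in[0,T]$ and $\mathsf T:=\{\gamma\in\Gamma:\ \gamma((t_1,t_2))\subset B\}$. Then for $\eta$-a.e. $\gamma\in\mathsf T$ the function $(t_1,t_2)\ni t\mapsto H(\gamma(t))$ is constant.
   Context: $T>0$, $\mathbb T^2=\mathbb R^2/\mathbb Z^2$, $b\colon\mathbb T^2\to\mathbb R^2$ is a bounded, everywhere defined Borel vector field with $b\in\mathrm{BV}(\mathbb T^2)$, nearly incompressible with density $\rho$ (i.e. $\ln\rho\in L^\infty((0,T)\times\mathbb T^2)$ and $\partial_t\rho+\mathrm{div}(\rho b)=0$ in $\mathscr D'$). $\Gamma:=C([0,T];\mathbb T^2)$, $e_t(\gamma)=\gamma(t)$. $\eta$ is a positive finite Borel measure on $\Gamma$, concentrated on curves with $\gamma(t)=\gamma(0)+\int_0^tb(\gamma(\tau))d\tau$, such that $(e_t)_\#\eta=\rho(t,\cdot)\mathscr L^2$ for all $t$. $\mathscr B:=\{B(x,r):x\in\mathbb Q^2,r\in\mathbb Q^+\}$. $\Gamma_B:=\{\gamma:\mathscr L^1(\{t:\gamma(t)\in B\})>0\}$; $\mathsf T_B:=\{\gamma\in\Gamma_B$ integral curve of $b$ with $\gamma(0)\notin B,\gamma(T)\notin B\}$; $\rho_B(t,\cdot)\mathscr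 L^2:=(e_t)_\#(\eta\llcorner\mathsf T_B)$; $r_B(x):=\int_0^T\rho_B(t,x)dt$. (One has $\mathrm{div}(r_Bb)=0$ in $\mathscr D'(B)$, so such a Lipschitz $H$ exists.) *)

theory Defs
  imports "HOL-Analysis.Analysis"
begin

text \<open>The flat torus T^2 = R^2/Z^2 is realised as the subset S^1 x S^1 of complex x complex,
  via the covering map tor.  Functions on T^2 are functions on complex x complex
  (only their values on the torus matter).\<close>

definition tor :: "real \<times> real \<Rightarrow> complex \<times> complex" where
  "tor x = (cis (2 * pi * fst x), cis (2 * pi * snd x))"

definition torus :: "(complex \<times> complex) set" where
  "torus = range tor"

definition tadd :: "complex \<times> complex \<Rightarrow> real \<times> real \<Rightarrow> complex \<times> complex" where
  "tadd z v = (fst z * cis (2 * pi * fst v), snd z * cis (2 * pi * snd v))"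

definition tleb :: "(complex \<times> complex) measure" where
  "tleb = distr (restrict_space lborel ({0..<1} \<times> {0..<1})) borel tor"

definition ratballs :: "(complex \<times> complex) set set" where
  "ratballs = {tor ` ball x r | x r. fst x \<in> \<rat> \<and> snd x \<in> \<rat> \<and> r \<in> \<rat> \<and> r > 0}"

text \<open>Path space Gamma = C([0,T]; T^2): curves are extensional functions on [0,T];
  its Borel sigma-algebra is the one generated by the evaluation maps.\<close>
definition Gamma :: "real \<Rightarrow> (real \<Rightarrow> complex \<times> complex) set" where
  "Gamma T = {\<gamma> \<in> extensional {0..T}. continuous_on {0..T} \<gamma> \<and> \<gamma> ` {0..T} \<subseteq> torus}"

definition Gamma_M :: "real \<Rightarrow> (real \<Rightarrow> complex \<times> complex) measure" where
  "Gamma_M T = restrict_space (Pi\<^sub>M {0..T} (\<lambda>_. borel)) (Gamma T)"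

definition integral_curve :: "(complex \<times> complex \<Rightarrow> real \<times> real) \<Rightarrow> real \<Rightarrow> (real \<Rightarrow> complex \<times> complex) \<Rightarrow> bool" where
  "integral_curve b T \<gamma> \<longleftrightarrow> \<gamma> \<in> Gamma T \<and>
     (\<forall>t\<in>{0..T}. \<gamma> t = tadd (\<gamma> 0) (LINT \<tau>:{0..t}|lborel. b (\<gamma> \<tau>)))"

definition Gamma_B :: "real \<Rightarrow> (complex \<times> complex) set \<Rightarrow> (real \<Rightarrow> complex \<times> complex) set" where
  "Gamma_B T B = {\<gamma> \<in> Gamma T. emeasure lborel {t \<in> {0..T}. \<gamma> t \<in> B} > 0}"

definition TB :: "(complex \<times> complex \<Rightarrow> real \<times> real) \<Rightarrow> real \<Rightarrow> (complex \<times> complex) set \<Rightarrow> (real \<Rightarrow> complex \<times> complex) set" where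
  "TB b T B = {\<gamma> \<in> Gamma_B T B. integral_curve b T \<gamma> \<and> \<gamma> 0 \<notin> B \<and> \<gamma> T \<notin> B}"

definition pd :: "('a::real_normed_vector \<Rightarrow> real) \<Rightarrow> 'a \<Rightarrow> 'a \<Rightarrow> real" where
  "pd f v z = frechet_derivative f (at z) v"

fun iter_pd :: "'a::real_normed_vector list \<Rightarrow> ('a \<Rightarrow> real) \<Rightarrow> 'a \<Rightarrow> real" where
  "iter_pd [] f = f"
| "iter_pd (v # vs) f = (\<lambda>z. pd (iter_pd vs f) v z)"

definition smooth :: "('a::euclidean_space \<Rightarrow> real) \<Rightarrow> bool" where
  "smooth f \<longleftrightarrow> (\<forall>vs. set vs \<subseteq> Basis \<longrightarrow> (\<forall>z. iter_pd vs f differentiable (at z)))"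

definition periodic2 :: "(real \<times> real \<Rightarrow> real) \<Rightarrow> bool" where
  "periodic2 f \<longleftrightarrow> (\<forall>x k1 k2. k1 \<in> \<int> \<and> k2 \<in> \<int> \<longrightarrow> f (x + (k1, k2)) = f x)"

text \<open>Test functions in C_c^infinity((0,T) x T^2), as functions on R x R^2 periodic in space.\<close>
definition test_fun :: "real \<Rightarrow> (real \<times> (real \<times> real) \<Rightarrow> real) \<Rightarrow> bool" where
  "test_fun T \<phi> \<longleftrightarrow> smooth \<phi> \<and> (\<forall>t. periodic2 (\<lambda>x. \<phi> (t, x))) \<and>
     (\<exists>a c. 0 < a \<and> a < c \<and> c < T \<and> (\<forall>t x. t \<notin> {a..c} \<longrightarrow> \<phi> (t, x) = 0))"

definition nearly_incompressible ::
  "real \<Rightarrow> (complex \<times> complex \<Rightarrow> real \<times> real) \<Rightarrow> (real \<Rightarrow> complex \<times> complex \<Rightarrow> real) \<Rightarrow> bool" where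
  "nearly_incompressible T b \<rho> \<longleftrightarrow>
     (\<lambda>(t, x). \<rho> t x) \<in> borel_measurable borel \<and>
     (\<exists>C. AE z in lborel. z \<in> {0<..<T} \<times> ({0..<1} \<times> {0..<1}) \<longrightarrow>
            \<rho> (fst z) (tor (snd z)) > 0 \<and> \<bar>ln (\<rho> (fst z) (tor (snd z)))\<bar> \<le> C) \<and>
     (\<forall>\<phi>. test_fun T \<phi> \<longrightarrow>
        (LINT z:{0<..<T} \<times> ({0..<1} \<times> {0..<1})|lborel.
           \<rho> (fst z) (tor (snd z)) *
           (pd \<phi> (1, 0, 0) z + fst (b (tor (snd z))) * pd \<phi> (0, 1, 0) z
                             + snd (b (tor (snd z))) * pd \<phi> (0, 0, 1) z)) = 0)"

text \<open>b in BV(T^2): b in L^1 and each component has distributional derivative a finite measure.\<close>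
definition BV_torus :: "(complex \<times> complex \<Rightarrow> real \<times> real) \<Rightarrow> bool" where
  "BV_torus b \<longleftrightarrow> set_integrable lborel ({0..<1} \<times> {0..<1}) (\<lambda>x. b (tor x)) \<and>
     (\<forall>f \<in> {fst, snd}. \<exists>C. \<forall>\<psi>1 \<psi>2. smooth \<psi>1 \<and> smooth \<psi>2 \<and> periodic2 \<psi>1 \<and> periodic2 \<psi>2 \<and>
          (\<forall>x. (\<psi>1 x)\<^sup>2 + (\<psi>2 x)\<^sup>2 \<le> 1) \<longrightarrow>
          \<bar>LINT x:{0..<1} \<times> {0..<1}|lborel. f (b (tor x)) * (pd \<psi>1 (1, 0) x + pd \<psi>2 (0, 1) x)\<bar> \<le> C)"

end

theory Submission
  imports Defs
begin

lemma density_lemma: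
  fixes E :: "real set"
  assumes E: "E \<in> sets lebesgue" and e: "e > 0"
  shows "negligible {x\<in>E. \<forall>r>0. \<exists>d. 0<d \<and> d<r \<and> e * (2*d) \<le> measure lebesgue (cball x d - E)}"
    (is "negligible ?S")
proof -
  have "?S \<in> null_sets lebesgue"
    unfolding completion.null_sets_outer_le
  proof (intro allI impI)
    fix \<epsilon> :: real assume "\<epsilon> > 0"
    obtain U where U: "open U" "E \<subseteq> U" "(U - E) \<in> lmeasurable" "emeasure lebesgue (U - E) < ennreal (e*\<epsilon>)"
      using sets_lebesgue_outer_open[OF E, of "e*\<epsilon>"] \<open>\<epsilon>>0\<close> e by (metis mult_pos_pos)
    define K where "K = {(x,d). x\<in>?S \<and> 0<d \<and> cball x d \<subseteq> U \<and> e*(2*d) \<le> measure lebesgue (cball x d - E)}"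
    have Kpos: "\<And>i. i \<in> K \<Longrightarrow> 0 < snd i" unfolding K_def by (simp add: case_prod_beta)
    have Kcov: "\<exists>i. i \<in> K \<and> x \<in> cball (fst i) (snd i) \<and> snd i < d" if "x \<in> ?S" "0 < d" for x d
    proof -
      have "x \<in> U" using that(1) U(2) by auto
      then obtain \<rho> where "\<rho> > 0" "cball x \<rho> \<subseteq> U"
        using U(1) open_contains_cball by meson
      have "min d \<rho> > 0" using \<open>\<rho>>0\<close> that by simp
      have xS: "\<forall>r>0. \<exists>d. 0<d \<and> d<r \<and> e * (2*d) \<le> measure lebesgue (cball x d - E)"
        using that(1) by simp
      obtain d' where "0<d'" "d' < min d \<rho>" "e*(2*d') \<le> measure lebesgue (cball x d' - E)"
        using xS \<open>min d \<rho> > 0\<close> by blast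
      moreover have "cball x d' \<subseteq> U" using \<open>cball x \<rho> \<subseteq> U\<close> \<open>d' < min d \<rho>\<close>
        by (meson min.strict_boundedE order_less_imp_le order_trans subset_cball)
      ultimately have "(x,d') \<in> K" using that(1) unfolding K_def
        by simp
      then show ?thesis using \<open>d' < min d \<rho>\<close> \<open>0<d'\<close> by (intro exI[of _ "(x,d')"]) simp
    qed
    obtain C where C: "countable C" "C \<subseteq> K"
      "pairwise (\<lambda>i j. disjnt (cball (fst i) (snd i)) (cball (fst j) (snd j))) C"
      "negligible(?S - (\<Union>i \<in> C. cball (fst i) (snd i)))"
      by (rule Vitali_covering_theorem_cballs[of K snd ?S fst, OF Kpos Kcov])
    define V where "V = (\<Union>i \<in> C. cball (fst i) (snd i))"
    have dj1: "disjoint_family_on (\<lambda>i. cball (fst i) (snd i)) C"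
      using C(3) unfolding disjoint_family_on_def pairwise_def disjnt_def by blast
    have dj2: "disjoint_family_on (\<lambda>i. cball (fst i) (snd i) - E) C"
      using dj1 unfolding disjoint_family_on_def by blast
    have "ennreal e * emeasure lebesgue V = ennreal e * (\<integral>\<^sup>+i. emeasure lebesgue (cball (fst i) (snd i)) \<partial>count_space C)"
      unfolding V_def by (subst emeasure_UN_countable) (use C(1) dj1 in auto)
    also have "\<dots> = (\<integral>\<^sup>+i. ennreal e * emeasure lebesgue (cball (fst i) (snd i)) \<partial>count_space C)"
      by (simp add: nn_integral_cmult)
    also have "\<dots> \<le> (\<integral>\<^sup>+i. emeasure lebesgue (cball (fst i) (snd i) - E) \<partial>count_space C)"
    proof (rule nn_integral_mono)
      fix i assume "i \<in> space (count_space C)"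
      then have iK: "i \<in> K" using C(2) by auto
      then have "0 < snd i" "e*(2 * snd i) \<le> measure lebesgue (cball (fst i) (snd i) - E)"
        unfolding K_def by (simp_all add: case_prod_beta)
      moreover have "emeasure lebesgue (cball (fst i) (snd i)) = ennreal (2 * snd i)"
        using \<open>0 < snd i\<close> by (simp add: cball_eq_atLeastAtMost)
      moreover have "emeasure lebesgue (cball (fst i) (snd i) - E) = ennreal (measure lebesgue (cball (fst i) (snd i) - E))"
      proof (rule emeasure_eq_ennreal_measure)
        have "emeasure lebesgue (cball (fst i) (snd i) - E) \<le> emeasure lebesgue (cball (fst i) (snd i))"
          by (rule emeasure_mono) auto
        then show "emeasure lebesgue (cball (fst i) (snd i) - E) \<noteq> top"
          using \<open>emeasure lebesgue (cball (fst i) (snd i)) = ennreal (2 * snd i)\<close> using ennreal_neq_top top.extremum_uniqueI by fastforce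
      qed
      ultimately show "ennreal e * emeasure lebesgue (cball (fst i) (snd i)) \<le> emeasure lebesgue (cball (fst i) (snd i) - E)"
        using e by (simp add: ennreal_mult'[symmetric])
    qed
    also have "\<dots> = emeasure lebesgue (\<Union>i\<in>C. cball (fst i) (snd i) - E)"
      by (subst emeasure_UN_countable) (use C(1) dj2 E in auto)
    also have "\<dots> \<le> emeasure lebesgue (U - E)"
    proof (rule emeasure_mono)
      show "(\<Union>i\<in>C. cball (fst i) (snd i) - E) \<subseteq> U - E"
      proof
        fix y assume "y \<in> (\<Union>i\<in>C. cball (fst i) (snd i) - E)"
        then obtain i where "i \<in> C" "y \<in> cball (fst i) (snd i)" "y \<notin> E" by blast
        then have "i \<in> K" using C(2) by blast
        then have "cball (fst i) (snd i) \<subseteq> U" unfolding K_def by (simp add: case_prod_beta)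
        then show "y \<in> U - E" using \<open>y \<in> cball (fst i) (snd i)\<close> \<open>y \<notin> E\<close> by blast
      qed
    qed (use U in auto)
    also have "\<dots> < ennreal e * ennreal \<epsilon>"
      using U(4) e \<open>\<epsilon>>0\<close> by (simp add: ennreal_mult)
    finally have VV: "emeasure lebesgue V < ennreal \<epsilon>"
      by (metis leI mult_left_mono zero_le not_le)
    have N: "?S - V \<in> null_sets lebesgue"
      using C(4) unfolding V_def by (simp add: negligible_iff_null_sets)
    have Vm: "V \<in> sets lebesgue"
      unfolding V_def by (intro sets.countable_UN'' C(1)) auto
    define T where "T = (?S - V) \<union> V"
    have "?S - V \<in> sets lebesgue" using N by (rule null_setsD2)
    then have Tm: "T \<in> sets lebesgue" unfolding T_def using Vm by (rule sets.Un)
    have "emeasure lebesgue T \<le> emeasure lebesgue (?S - V) + emeasure lebesgue V"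
      unfolding T_def by (rule emeasure_subadditive) (use N Vm in auto)
    also have "\<dots> = emeasure lebesgue V" using N by auto
    finally have TT: "emeasure lebesgue T < ennreal \<epsilon>" using VV by simp
    then have Tf: "T \<in> fmeasurable lebesgue" using Tm by (intro fmeasurableI) (simp_all del: emeasure_completion add: order_less_trans[OF _ ennreal_less_top])
    moreover have "?S \<subseteq> T" unfolding T_def by blast
    moreover have "measure lebesgue T \<le> \<epsilon>"
      using TT Tf \<open>\<epsilon>>0\<close> by (simp add: emeasure_eq_measure2 ennreal_less_iff)
    ultimately show "\<exists>T\<in>fmeasurable lebesgue. ?S \<subseteq> T \<and> measure lebesgue T \<le> \<epsilon>" by blast
  qed
  then show ?thesis by (simp add: negligible_iff_null_sets)
qed

definition nondense :: "real set \<Rightarrow> real \<Rightarrow> real set" where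
  "nondense E e = {x\<in>E. \<forall>r>0. \<exists>d. 0<d \<and> d<r \<and> e * (2*d) \<le> measure lebesgue (cball x d - E)}"

lemma ex_inv_Suc: "(x::real) > 0 \<Longrightarrow> \<exists>n. inverse (real (Suc n)) < x"
  by (metis Suc_pred ex_inverse_of_nat_less)

lemma lebesgue_points:
  fixes g :: "real \<Rightarrow> 'a::euclidean_space"
  assumes g: "g \<in> borel_measurable borel" and M: "\<And>s. norm (g s) \<le> M"
  shows "\<exists>Z. negligible Z \<and> (\<forall>t. t \<notin> Z \<longrightarrow> (\<forall>\<epsilon>>0. \<exists>\<delta>>0. \<forall>d. 0<d \<and> d<\<delta> \<longrightarrow>
            integral (cball t d) (\<lambda>s. norm (g s - g t)) \<le> \<epsilon> * d))"
proof -
  obtain D :: "'a set" where D: "countable D" "\<And>X. open X \<Longrightarrow> X \<noteq> {} \<Longrightarrow> \<exists>d\<in>D. d \<in> X"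
    using countable_dense_exists by blast
  define E where "E q n = g -` ball q (inverse (real (Suc n)))" for q n
  have Em: "E q n \<in> sets lebesgue" for q n
  proof -
    have "E q n \<in> sets borel" unfolding E_def
      using measurable_sets_borel[OF g, of "ball q (inverse (real (Suc n)))"] by simp
    then show ?thesis by (simp add: sets_completionI_sets)
  qed
  define Z where "Z = \<Union>((\<lambda>(q,n,m). nondense (E q n) (inverse (real (Suc m)))) ` (D \<times> UNIV \<times> UNIV))"
  have "negligible Z" unfolding Z_def
  proof (rule negligible_countable_Union)
    show "countable ((\<lambda>(q,n,m). nondense (E q n) (inverse (real (Suc m)))) ` (D \<times> UNIV \<times> UNIV))"
      using D(1) by (intro countable_image countable_SIGMA) auto
  next
    fix S assume "S \<in> (\<lambda>(q,n,m). nondense (E q n) (inverse (real (Suc m)))) ` (D \<times> UNIV \<times> UNIV)"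
    then obtain q n m where "S = nondense (E q n) (inverse (real (Suc m)))" by auto
    then show "negligible S" unfolding nondense_def by (simp add: density_lemma Em)
  qed
  moreover have main: "\<exists>\<delta>>0. \<forall>d. 0<d \<and> d<\<delta> \<longrightarrow> integral (cball t d) (\<lambda>s. norm (g s - g t)) \<le> \<epsilon> * d"
    if t: "t \<notin> Z" and \<epsilon>: "\<epsilon> > 0" for t \<epsilon>
  proof -
    have M0: "M \<ge> 0" using M[of 0] norm_ge_zero order_trans by blast
    obtain n where n: "inverse (real (Suc n)) < \<epsilon>/8" using ex_inv_Suc[of "\<epsilon>/8"] \<epsilon> by auto
    obtain m where m: "inverse (real (Suc m)) < \<epsilon>/(8*(M+1))" using ex_inv_Suc[of "\<epsilon>/(8*(M+1))"] \<epsilon> M0 by auto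
    define r where "r = inverse (real (Suc n))"
    define e where "e = inverse (real (Suc m))"
    have r0: "r > 0" "e > 0" unfolding r_def e_def by auto
    obtain q where q: "q \<in> D" "q \<in> ball (g t) r" using D(2)[of "ball (g t) r"] r0 by auto
    have tE: "t \<in> E q n" unfolding E_def r_def[symmetric] using q(2) by (simp add: dist_commute)
    have "(q,n,m) \<in> D \<times> UNIV \<times> UNIV" using q(1) by simp
    then have "nondense (E q n) e \<in> (\<lambda>(q,n,m). nondense (E q n) (inverse (real (Suc m)))) ` (D \<times> UNIV \<times> UNIV)"
      unfolding e_def by (rule rev_image_eqI) simp
    then have "nondense (E q n) e \<subseteq> Z" unfolding Z_def by (rule Union_upper)
    then have "t \<notin> nondense (E q n) e" using t by blast
    then have "\<not> (\<forall>r>0. \<exists>d. 0<d \<and> d<r \<and> e * (2*d) \<le> measure lebesgue (cball t d - E q n))"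
      using tE unfolding nondense_def by simp
    then obtain \<delta> where \<delta>: "\<delta> > 0" "\<And>d. 0<d \<Longrightarrow> d<\<delta> \<Longrightarrow> measure lebesgue (cball t d - E q n) < e * (2*d)"
      by (auto simp: not_le)
    show ?thesis
    proof (intro exI[of _ \<delta>] conjI allI impI)
      fix d assume d: "0 < d \<and> d < \<delta>"
      let ?F = "cball t d - E q n"
      have cm: "cball t d \<in> lmeasurable" by (rule lmeasurable_cball)
      then have cs: "cball t d \<in> sets lebesgue" by (rule fmeasurableD)
      have "?F \<inter> cball t d \<in> sets lebesgue"
        by (rule sets.Int[OF sets.Diff[OF cs Em] cs])
      then have Fm: "?F \<inter> cball t d \<in> lmeasurable"
        by (intro fmeasurableI2[OF cm]) (rule Int_lower2)
      have bnd: "norm (g s - g t) \<le> 2*r + 2*M * indicator ?F s" if "s \<in> cball t d" for s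
      proof (cases "s \<in> E q n")
        case True
        then have "dist (g s) q < r" using tE unfolding E_def r_def by (simp add: dist_commute)
        moreover have "dist (g t) q < r" using q(2) by (simp add: dist_commute)
        moreover have "dist (g s) (g t) \<le> dist (g s) q + dist (g t) q" by (rule dist_triangle2)
        ultimately have "norm (g s - g t) < 2*r"
          by (simp add: dist_norm)
        then show ?thesis using M0 by (simp add: indicator_def)
      next
        case False
        have "norm (g s - g t) \<le> norm (g s) + norm (g t)" by (rule norm_triangle_ineq4)
        also have "\<dots> \<le> 2*M" using M[of s] M[of t] by simp
        finally show ?thesis using False that r0 by (simp add: indicator_def)
      qed
      have int1: "(\<lambda>s. norm (g s - g t)) integrable_on cball t d"
      proof -
        have "(\<lambda>s. g s - g t) absolutely_integrable_on cball t d"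
        proof (rule measurable_bounded_by_integrable_imp_absolutely_integrable)
          show "(\<lambda>s. g s - g t) \<in> borel_measurable (lebesgue_on (cball t d))"
          proof -
            have "g \<in> borel_measurable lborel" using g by simp
            then have "g \<in> borel_measurable lebesgue" by (rule measurable_completion)
            then have "g \<in> borel_measurable (lebesgue_on (cball t d))" by (rule measurable_restrict_space1)
            then show ?thesis by (intro borel_measurable_diff) simp_all
          qed
          show "(\<lambda>s. 2*M) integrable_on cball t d" by (rule integrable_on_const[OF cm])
          show "norm (g s - g t) \<le> 2*M" for s
            using norm_triangle_ineq4[of "g s" "g t"] M[of s] M[of t] by simp
        qed simp
        then show ?thesis by (simp add: absolutely_integrable_on_def)
      qed
      have int2: "(\<lambda>s. 2*r + 2*M * indicator ?F s) integrable_on cball t d"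
        proof -
        have "indicat_real ?F integrable_on cball t d" using Fm by (simp add: integrable_on_indicator)
        then have "(\<lambda>s. (2*M) *\<^sub>R indicat_real ?F s) integrable_on cball t d" by (rule integrable_cmul)
        moreover have "(\<lambda>s. 2*r) integrable_on cball t d" by (rule integrable_on_const[OF cm])
        ultimately show ?thesis by (intro integrable_add) simp_all
      qed
      have "integral (cball t d) (\<lambda>s. norm (g s - g t)) \<le> integral (cball t d) (\<lambda>s. 2*r + 2*M * indicator ?F s)"
        using int1 int2 bnd by (intro integral_le) auto
      also have "\<dots> = 2*r*(2*d) + 2*M * measure lebesgue (?F \<inter> cball t d)"
      proof -
        have i1: "indicat_real ?F integrable_on cball t d" using Fm by (simp add: integrable_on_indicator)
        have "integral (cball t d) (\<lambda>s. 2*r + 2*M * indicator ?F s) =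
              integral (cball t d) (\<lambda>s. 2*r) + integral (cball t d) (\<lambda>s. 2*M * indicator ?F s)"
          by (rule integral_add) (use integrable_on_const[OF cm] integrable_on_mult_right[OF i1, of "2*M"] in \<open>simp_all\<close>)
        also have "integral (cball t d) (\<lambda>s. 2*r) = 2*r*(2*d)"
          using d by (simp add: cball_eq_atLeastAtMost)
        also have "integral (cball t d) (\<lambda>s. 2*M * indicator ?F s) = 2*M * integral (cball t d) (indicator ?F)"
          by (rule integral_mult_right)
        also have "integral (cball t d) (indicator ?F) = measure lebesgue (?F \<inter> cball t d)"
          by (rule integral_indicator[OF Fm])
        finally show ?thesis .
      qed
      also have "\<dots> \<le> 2*r*(2*d) + 2*M * (e*(2*d))"
      proof -
        have "?F \<inter> cball t d = ?F" by blast
        then have "measure lebesgue (?F \<inter> cball t d) \<le> e*(2*d)" using \<delta>(2)[of d] d by simp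
        then show ?thesis using M0 by (intro add_left_mono mult_left_mono) auto
      qed
      also have "\<dots> \<le> \<epsilon> * d"
      proof -
        have "4*r \<le> \<epsilon>/2" using n unfolding r_def by simp
        moreover have "4*M*e \<le> \<epsilon>/2"
        proof -
          have "M*e \<le> (M+1)*e" using r0 by (simp add: mult_right_mono)
          also have "\<dots> \<le> (M+1) * (\<epsilon>/(8*(M+1)))" using m M0 unfolding e_def by (intro mult_left_mono) auto
          also have "\<dots> = \<epsilon>/8" using M0 by (simp add: field_simps)
          finally show ?thesis by simp
        qed
        ultimately have "4*r + 4*M*e \<le> \<epsilon>" by simp
        then have "(4*r + 4*M*e) * d \<le> \<epsilon> * d" using d by (intro mult_right_mono) auto
        then show ?thesis by (simp add: algebra_simps)
      qed
      finally show "integral (cball t d) (\<lambda>s. norm (g s - g t)) \<le> \<epsilon> * d" .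
    qed (use \<delta> in auto)
  qed
  show ?thesis
  proof (intro exI[of _ Z] conjI allI impI)
    show "negligible Z" by fact
    fix t \<epsilon> :: real assume "t \<notin> Z" "\<epsilon> > 0"
    then show "\<exists>\<delta>>0. \<forall>d. 0<d \<and> d<\<delta> \<longrightarrow> integral (cball t d) (\<lambda>s. norm (g s - g t)) \<le> \<epsilon> * d"
      by (rule main)
  qed
qed

lemma seg_bound:
  fixes g :: "real \<Rightarrow> 'a::euclidean_space"
  assumes gi: "\<And>u v. g integrable_on {u..v}"
    and ni: "\<And>u v. (\<lambda>s. norm (g s - g t)) integrable_on {u..v}"
    and uw: "u \<le> w" and sub: "{u..w} \<subseteq> cball t d"
    and L: "integral (cball t d) (\<lambda>s. norm (g s - g t)) \<le> \<epsilon> * d"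
  shows "norm (integral {u..w} g - (w - u) *\<^sub>R g t) \<le> \<epsilon> * d"
proof -
  have "integral {u..w} (\<lambda>s. g s - g t) = integral {u..w} g - integral {u..w} (\<lambda>s. g t)"
    by (rule integral_diff) (use gi in auto)
  also have "integral {u..w} (\<lambda>s. g t) = (w - u) *\<^sub>R g t" using uw by simp
  finally have eq: "integral {u..w} g - (w - u) *\<^sub>R g t = integral {u..w} (\<lambda>s. g s - g t)" by simp
  have "norm (integral {u..w} (\<lambda>s. g s - g t)) \<le> integral {u..w} (\<lambda>s. norm (g s - g t))"
    by (rule integral_norm_bound_integral) (use gi ni in \<open>auto intro: integrable_diff\<close>)
  also have "\<dots> \<le> integral (cball t d) (\<lambda>s. norm (g s - g t))"
    by (rule integral_subset_le[OF sub]) (use ni in \<open>auto simp: cball_eq_atLeastAtMost\<close>)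
  finally show ?thesis using L eq by simp
qed

lemma lp_deriv:
  fixes g :: "real \<Rightarrow> 'a::euclidean_space"
  assumes gi: "\<And>u v. g integrable_on {u..v}"
    and ni: "\<And>u v. (\<lambda>s. norm (g s - g t)) integrable_on {u..v}"
    and L: "\<forall>\<epsilon>>0. \<exists>\<delta>>0. \<forall>d. 0<d \<and> d<\<delta> \<longrightarrow> integral (cball t d) (\<lambda>s. norm (g s - g t)) \<le> \<epsilon> * d"
    and at: "a < t"
  shows "((\<lambda>s. integral {a..s} g) has_derivative (\<lambda>h. h *\<^sub>R g t)) (at t)"
  unfolding has_derivative_at_alt
proof (intro conjI allI impI)
  show "bounded_linear (\<lambda>h. h *\<^sub>R g t)" by (rule bounded_linear_scaleR_left)
  fix \<epsilon> :: real assume "\<epsilon> > 0"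
  then obtain \<delta> where \<delta>: "\<delta> > 0" "\<And>d. 0<d \<Longrightarrow> d<\<delta> \<Longrightarrow> integral (cball t d) (\<lambda>s. norm (g s - g t)) \<le> \<epsilon> * d"
    using L by blast
  show "\<exists>d>0. \<forall>y. norm (y - t) < d \<longrightarrow>
           norm (integral {a..y} g - integral {a..t} g - (y - t) *\<^sub>R g t) \<le> \<epsilon> * norm (y - t)"
  proof (intro exI[of _ "min \<delta> (t - a)"] conjI allI impI)
    show "0 < min \<delta> (t - a)" using \<delta> at by simp
    fix y :: real assume y: "norm (y - t) < min \<delta> (t - a)"
    consider "y = t" | "t < y" | "y < t" by linarith
    then show "norm (integral {a..y} g - integral {a..t} g - (y - t) *\<^sub>R g t) \<le> \<epsilon> * norm (y - t)"
    proof cases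
      case 1 then show ?thesis by simp
    next
      case 2
      have "integral {a..t} g + integral {t..y} g = integral {a..y} g"
        by (rule Henstock_Kurzweil_Integration.integral_combine) (use at 2 gi in auto)
      then have "integral {a..y} g - integral {a..t} g - (y - t) *\<^sub>R g t = integral {t..y} g - (y - t) *\<^sub>R g t"
        by (simp add: algebra_simps)
      also have "norm \<dots> \<le> \<epsilon> * (y - t)"
      proof (rule seg_bound[OF gi ni])
        show "{t..y} \<subseteq> cball t (y - t)" by (auto simp: cball_eq_atLeastAtMost)
        show "integral (cball t (y - t)) (\<lambda>s. norm (g s - g t)) \<le> \<epsilon> * (y - t)"
          using \<delta>(2)[of "y - t"] 2 y by simp
      qed (use 2 in simp)
      finally show ?thesis using 2 by simp
    next
      case 3
      have "a \<le> y" using y 3 by (simp add: abs_if split: if_splits)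
      have "integral {a..y} g + integral {y..t} g = integral {a..t} g"
        by (rule Henstock_Kurzweil_Integration.integral_combine) (use \<open>a \<le> y\<close> 3 gi in auto)
      then have "integral {a..y} g - integral {a..t} g - (y - t) *\<^sub>R g t = - (integral {y..t} g - (t - y) *\<^sub>R g t)"
        by (simp add: algebra_simps)
      also have "norm \<dots> \<le> \<epsilon> * (t - y)" unfolding norm_minus_cancel
      proof (rule seg_bound[OF gi ni])
        show "{y..t} \<subseteq> cball t (t - y)" by (auto simp: cball_eq_atLeastAtMost)
        show "integral (cball t (t - y)) (\<lambda>s. norm (g s - g t)) \<le> \<epsilon> * (t - y)"
          using \<delta>(2)[of "t - y"] 3 y by simp
      qed (use 3 in simp)
      finally show ?thesis using 3 by simp
    qed
  qed
qed

lemma zero_deriv_image_negligible: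
  fixes f :: "real \<Rightarrow> real"
  assumes der: "\<And>t. t \<in> S \<Longrightarrow> (f has_derivative (\<lambda>h. 0)) (at t)"
  shows "negligible (f ` S)"
proof -
  let ?F = "\<lambda>x::real^1. vec (f (x $ 1)) :: real^1"
  have d: "(?F has_derivative (*\<^sub>R) 0) (at x within vec ` S)" if xS: "x \<in> vec ` S" for x
  proof -
    obtain z where z: "z \<in> S" "x = vec z" using xS by blast
    have "(f has_derivative (\<lambda>h. h * 0)) (at z within S)"
      using der[OF z(1)] has_derivative_at_withinI by simp
    then show ?thesis using has_derivative_vector_1[of f "\<lambda>_. 0" z S] z by simp
  qed
  have m0: "matrix ((*\<^sub>R) (0::real) :: real^1 \<Rightarrow> real^1) = 0"
    by (simp add: matrix_def vec_eq_iff)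
  have "negligible (?F ` vec ` S)"
    by (rule baby_Sard[where f' = "\<lambda>_. (*\<^sub>R) 0"]) (use d m0 in auto)
  moreover have "?F ` vec ` S = vec ` (f ` S)" by (auto simp: image_image)
  ultimately have n1: "negligible (vec ` (f ` S) :: (real^1) set)" by simp
  have "negligible ((\<lambda>x::real^1. x $ 1) ` (vec ` (f ` S)))"
    by (rule negligible_differentiable_image_negligible[OF _ n1])
       (auto intro!: bounded_linear_imp_differentiable_on)
  moreover have "(\<lambda>x::real^1. x $ 1) ` (vec ` (f ` S)) = f ` S" by (auto simp: image_image)
  ultimately show ?thesis by simp
qed

lemma const_from_ae_deriv:
  fixes f :: "real \<Rightarrow> real"
  assumes lip: "\<And>x y. x \<in> {a<..<b} \<Longrightarrow> y \<in> {a<..<b} \<Longrightarrow> \<bar>f x - f y\<bar> \<le> L * \<bar>x - y\<bar>"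
    and N: "negligible N"
    and der: "\<And>t. t \<in> {a<..<b} - N \<Longrightarrow> (f has_derivative (\<lambda>h. 0)) (at t)"
  shows "\<exists>c. \<forall>t\<in>{a<..<b}. f t = c"
proof -
  have n1: "negligible (f ` ({a<..<b} - N))" by (rule zero_deriv_image_negligible) (use der in auto)
  have n2: "negligible (f ` ({a<..<b} \<inter> N))"
  proof (rule negligible_locally_Lipschitz_image)
    show "negligible ({a<..<b} \<inter> N)" using N by (simp add: negligible_Int)
    fix x assume "x \<in> {a<..<b} \<inter> N"
    then show "\<exists>T B. open T \<and> x \<in> T \<and> (\<forall>y\<in>{a<..<b} \<inter> N \<inter> T. norm (f y - f x) \<le> B * norm (y - x))"
      using lip by (intro exI[of _ "{a<..<b}"] exI[of _ L]) (auto simp: abs_minus_commute)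
  qed auto
  have img: "f ` {a<..<b} = f ` ({a<..<b} - N) \<union> f ` ({a<..<b} \<inter> N)" by blast
  have neg: "negligible (f ` {a<..<b})" unfolding img using n1 n2 by (rule negligible_Un)
  have cont: "continuous_on {x..y} f" if "x \<in> {a<..<b}" "y \<in> {a<..<b}" for x y
  proof -
    have sub: "{x..y} \<subseteq> {a<..<b}" using that by auto
    have "(max L 0)-lipschitz_on {x..y} f"
    proof (rule lipschitz_onI)
      fix u v assume "u \<in> {x..y}" "v \<in> {x..y}"
      then have "\<bar>f u - f v\<bar> \<le> L * \<bar>u - v\<bar>" using lip sub by blast
      also have "\<dots> \<le> max L 0 * \<bar>u - v\<bar>" by (intro mult_right_mono) auto
      finally show "dist (f u) (f v) \<le> max L 0 * dist u v" by (simp add: dist_real_def)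
    qed simp
    then show ?thesis by (rule lipschitz_on_continuous_on)
  qed
  have eq: "f x = f y" if xy: "x \<in> {a<..<b}" "y \<in> {a<..<b}" "x \<le> y" for x y
  proof (rule ccontr)
    assume ne: "f x \<noteq> f y"
    define p where "p = min (f x) (f y)"
    define q where "q = max (f x) (f y)"
    have pq: "p < q" using ne unfolding p_def q_def by auto
    have "{p..q} \<subseteq> f ` {a<..<b}"
    proof
      fix z assume z: "z \<in> {p..q}"
      have "\<exists>w. x \<le> w \<and> w \<le> y \<and> f w = z"
      proof (cases "f x \<le> f y")
        case True
        then show ?thesis using z p_def q_def by (intro IVT'[OF _ _ xy(3) cont[OF xy(1,2)]]) auto
      next
        case False
        then show ?thesis using z p_def q_def by (intro IVT2'[OF _ _ xy(3) cont[OF xy(1,2)]]) auto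
      qed
      then obtain w where "x \<le> w" "w \<le> y" "f w = z" by blast
      then show "z \<in> f ` {a<..<b}" using xy by force
    qed
    then have "negligible {p..q}" using neg negligible_subset by blast
    then show False using pq by (simp add: negligible_iff_measure)
  qed
  show ?thesis
  proof (cases "{a<..<b} = {}")
    case True then show ?thesis by auto
  next
    case False
    then obtain x0 where x0: "x0 \<in> {a<..<b}" by blast
    show ?thesis
    proof (intro exI[of _ "f x0"] ballI)
      fix t assume t: "t \<in> {a<..<b}"
      show "f t = f x0"
        using eq[OF t x0] eq[OF x0 t] by linarith
    qed
  qed
qed

lemma floor_approx_lim: "(\<lambda>n. real_of_int \<lfloor>t * real (Suc n)\<rfloor> / real (Suc n)) \<longlonglongrightarrow> (t::real)"
proof -
  have b: "\<bar>real_of_int \<lfloor>t * real (Suc n)\<rfloor> / real (Suc n) - t\<bar> \<le> inverse (real (Suc n))" for n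
  proof -
    define k where "k = real (Suc n)"
    have k: "k > 0" unfolding k_def by simp
    have "\<bar>real_of_int \<lfloor>t * k\<rfloor> - t * k\<bar> \<le> 1" by linarith
    moreover have "real_of_int \<lfloor>t * k\<rfloor> / k - t = (real_of_int \<lfloor>t * k\<rfloor> - t * k) / k"
      using k by (simp add: field_simps)
    ultimately have "\<bar>real_of_int \<lfloor>t * k\<rfloor> / k - t\<bar> \<le> 1 / k"
      using k by (simp add: abs_div_pos divide_right_mono)
    then show ?thesis by (simp add: k_def divide_inverse)
  qed
  have "(\<lambda>n. real_of_int \<lfloor>t * real (Suc n)\<rfloor> / real (Suc n) - t) \<longlonglongrightarrow> 0"
  proof (rule tendsto_sandwich[of "\<lambda>n. - inverse (real (Suc n))" _ _ "\<lambda>n. inverse (real (Suc n))"])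
    show "\<forall>\<^sub>F n in sequentially. - inverse (real (Suc n)) \<le> real_of_int \<lfloor>t * real (Suc n)\<rfloor> / real (Suc n) - t"
      using b by (intro always_eventually allI) (smt (verit))
    show "\<forall>\<^sub>F n in sequentially. real_of_int \<lfloor>t * real (Suc n)\<rfloor> / real (Suc n) - t \<le> inverse (real (Suc n))"
      using b by (intro always_eventually allI) (smt (verit))
    show "(\<lambda>n. - inverse (real (Suc n))) \<longlonglongrightarrow> 0"
      using tendsto_minus[OF LIMSEQ_inverse_real_of_nat] by simp
  qed (rule LIMSEQ_inverse_real_of_nat)
  then show ?thesis by (simp add: LIM_zero_iff)
qed

lemma path_null:
  fixes M :: "(real \<Rightarrow> 'b::metric_space) measure"
  assumes sf: "sigma_finite_measure M"
   and cont: "\<And>\<gamma>. \<gamma> \<in> space M \<Longrightarrow> continuous_on {0..T} \<gamma>"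
   and meas: "\<And>s. s \<in> {0..T} \<Longrightarrow> (\<lambda>\<gamma>. \<gamma> s) \<in> measurable M borel"
   and A: "A \<in> sets borel"
   and null: "\<And>s. s \<in> {0..T} \<Longrightarrow> emeasure M {\<gamma>\<in>space M. \<gamma> s \<in> A} = 0"
   and T: "0 \<le> T"
  shows "AE \<gamma> in M. negligible {t\<in>{0..T}. \<gamma> t \<in> A}"
proof -
  interpret M: sigma_finite_measure M by (rule sf)
  interpret P: pair_sigma_finite M lborel
    by (intro pair_sigma_finite.intro sf lborel.sigma_finite_measure_axioms)
  define cl where "cl t = max 0 (min T t)" for t
  have clT: "cl t \<in> {0..T}" for t using T unfolding cl_def by auto
  have clT2: "0 \<le> cl t" "cl t \<le> T" for t using clT[of t] by auto
  have clid: "t \<in> {0..T} \<Longrightarrow> cl t = t" for t unfolding cl_def by auto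
  have clc: "continuous_on UNIV cl" unfolding cl_def by (intro continuous_intros)
  define G where "G = (\<lambda>x::(real \<Rightarrow> 'b) \<times> real. fst x (cl (snd x)))"
  have Gm: "G \<in> borel_measurable (M \<Otimes>\<^sub>M lborel)"
  proof (rule borel_measurable_LIMSEQ_metric)
    fix n :: nat
    define f where "f = (\<lambda>(k::int) (x::(real \<Rightarrow> 'b) \<times> real). fst x (cl (real_of_int k / real (Suc n))))"
    define g where "g = (\<lambda>x::(real \<Rightarrow> 'b) \<times> real. \<lfloor>snd x * real (Suc n)\<rfloor>)"
    have "(\<lambda>x. f (g x) x) \<in> borel_measurable (M \<Otimes>\<^sub>M lborel)"
    proof (rule measurable_compose_countable'[where I=UNIV and f=f and g=g])
      fix k :: int
      show "(\<lambda>x. f k x) \<in> borel_measurable (M \<Otimes>\<^sub>M lborel)"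
        unfolding f_def by (rule measurable_compose[OF measurable_fst meas[OF clT]])
    next
      show "g \<in> measurable (M \<Otimes>\<^sub>M lborel) (count_space UNIV)"
        unfolding g_def by measurable
    qed simp
    then show "(\<lambda>x. fst x (cl (real_of_int \<lfloor>snd x * real (Suc n)\<rfloor> / real (Suc n)))) \<in> borel_measurable (M \<Otimes>\<^sub>M lborel)"
      by (simp add: f_def g_def)
  next
    fix x :: "(real \<Rightarrow> 'b) \<times> real" assume x: "x \<in> space (M \<Otimes>\<^sub>M lborel)"
    then have "fst x \<in> space M" by (auto simp: space_pair_measure)
    then have c: "continuous_on {0..T} (fst x)" by (rule cont)
    have "(\<lambda>n. cl (real_of_int \<lfloor>snd x * real (Suc n)\<rfloor> / real (Suc n))) \<longlonglongrightarrow> cl (snd x)"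
      by (rule continuous_on_tendsto_compose[OF clc floor_approx_lim]) auto
    then show "(\<lambda>n. fst x (cl (real_of_int \<lfloor>snd x * real (Suc n)\<rfloor> / real (Suc n)))) \<longlonglongrightarrow> G x"
      unfolding G_def by (rule continuous_on_tendsto_compose[OF c]) (simp_all add: clT2)
  qed
  define F :: "(real \<Rightarrow> 'b) \<times> real \<Rightarrow> ennreal" where "F x = indicator {0..T} (snd x) * indicator A (G x)" for x
  have Fm: "(F :: _ \<Rightarrow> ennreal) \<in> borel_measurable (M \<Otimes>\<^sub>M lborel)"
    unfolding F_def using Gm A by measurable
  have inner0: "(\<integral>\<^sup>+\<gamma>. F (\<gamma>, t) \<partial>M) = 0" for t
  proof (cases "t \<in> {0..T}")
    case True
    have "(\<integral>\<^sup>+\<gamma>. F (\<gamma>, t) \<partial>M) = (\<integral>\<^sup>+\<gamma>. indicator {\<gamma>\<in>space M. \<gamma> t \<in> A} \<gamma> \<partial>M)"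
      by (intro nn_integral_cong) (use True in \<open>simp add: F_def G_def clid[OF True] indicator_def\<close>)
    also have "\<dots> = emeasure M {\<gamma>\<in>space M. \<gamma> t \<in> A}"
      by (rule nn_integral_indicator) (use measurable_sets[OF meas[OF True] A] in \<open>simp add: vimage_def Int_def conj_commute\<close>)
    finally show ?thesis using null[OF True] by simp
  next
    case False then show ?thesis by (simp add: F_def)
  qed
  have "(\<integral>\<^sup>+\<gamma>. (\<integral>\<^sup>+t. F (\<gamma>, t) \<partial>lborel) \<partial>M) = (\<integral>\<^sup>+t. (\<integral>\<^sup>+\<gamma>. F (\<gamma>, t) \<partial>M) \<partial>lborel)"
    using P.Fubini[OF Fm] by simp
  also have "\<dots> = 0" by (simp add: inner0)
  finally have I0: "(\<integral>\<^sup>+\<gamma>. (\<integral>\<^sup>+t. F (\<gamma>, t) \<partial>lborel) \<partial>M) = 0" .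
  have hm: "(\<lambda>\<gamma>. \<integral>\<^sup>+t. F (\<gamma>, t) \<partial>lborel) \<in> borel_measurable M"
    by (rule lborel.borel_measurable_nn_integral_fst[OF Fm])
  have "AE \<gamma> in M. (\<integral>\<^sup>+t. F (\<gamma>, t) \<partial>lborel) = 0"
    using I0 nn_integral_0_iff_AE[OF hm] by simp
  then show ?thesis
  proof (rule AE_mp[OF _ AE_I2])
    fix \<gamma> assume g: "\<gamma> \<in> space M"
    show "(\<integral>\<^sup>+t. F (\<gamma>, t) \<partial>lborel) = 0 \<longrightarrow> negligible {t\<in>{0..T}. \<gamma> t \<in> A}"
    proof
      assume z: "(\<integral>\<^sup>+t. F (\<gamma>, t) \<partial>lborel) = 0"
      let ?S = "{t\<in>{0..T}. \<gamma> t \<in> A}"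
      have "continuous_on UNIV (\<lambda>t. \<gamma> (cl t))"
        by (rule continuous_on_compose2[OF cont[OF g] clc]) (use clT in auto)
      then have "(\<lambda>t. \<gamma> (cl t)) \<in> borel_measurable borel" by (rule borel_measurable_continuous_onI)
      then have "(\<lambda>t. \<gamma> (cl t)) -` A \<in> sets borel" using A by (simp add: measurable_sets_borel)
      moreover have "?S = {0..T} \<inter> (\<lambda>t. \<gamma> (cl t)) -` A" using clid by auto
      ultimately have Sm: "?S \<in> sets borel" by auto
      have "(\<integral>\<^sup>+t. F (\<gamma>, t) \<partial>lborel) = (\<integral>\<^sup>+t. indicator ?S t \<partial>lborel)"
        by (intro nn_integral_cong) (simp add: F_def G_def clid indicator_def)
      also have "\<dots> = emeasure lborel ?S" using Sm by simp
      finally have "emeasure lborel ?S = 0" using z by simp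
      then have "?S \<in> null_sets lborel" using Sm by (simp add: null_sets_def)
      then show "negligible ?S" by (simp add: negligible_iff_null_sets null_sets_completionI)
    qed
  qed
qed

lemma tadd_tor: "tadd (tor x) v = tor (x + v)"
  by (simp add: tadd_def tor_def cis_mult distrib_left)

lemma lin2:
  fixes D :: "real \<times> real \<Rightarrow> real"
  assumes "linear D"
  shows "D (a, b) = a * D (1, 0) + b * D (0, 1)"
proof -
  have e: "(a, b) = a *\<^sub>R (1::real, 0::real) + b *\<^sub>R (0, 1)" by simp
  have "D (a *\<^sub>R (1::real, 0::real) + b *\<^sub>R (0, 1)) = D (a *\<^sub>R (1, 0)) + D (b *\<^sub>R (0, 1))"
    by (rule linear_add[OF assms])
  also have "D (a *\<^sub>R (1::real, 0::real)) = a *\<^sub>R D (1, 0)" by (rule linear_scale[OF assms])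
  also have "D (b *\<^sub>R (0::real, 1::real)) = b *\<^sub>R D (0, 1)" by (rule linear_scale[OF assms])
  finally have "D (a *\<^sub>R (1::real, 0::real) + b *\<^sub>R (0, 1)) = a * D (1, 0) + b * D (0, 1)" by simp
  then show ?thesis by (subst e)
qed

lemma curve_const:
  fixes b :: "complex \<times> complex \<Rightarrow> real \<times> real" and \<gamma> :: "real \<Rightarrow> complex \<times> complex"
    and H :: "complex \<times> complex \<Rightarrow> real" and r :: "real \<times> real \<Rightarrow> real"
  assumes ic: "integral_curve b T \<gamma>"
    and bm: "b \<in> borel_measurable borel"
    and bnd: "\<And>z. z \<in> torus \<Longrightarrow> norm (b z) \<le> Mb"
    and negl: "negligible {t\<in>{0..T}. \<gamma> t \<in> A}"
    and good: "\<And>x. tor x \<in> B \<Longrightarrow> tor x \<notin> A \<Longrightarrow>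
                 \<exists>D. ((H \<circ> tor) has_derivative D) (at x) \<and> (- D (0, 1), D (1, 0)) = r x *\<^sub>R b (tor x)"
    and Hlip: "L-lipschitz_on UNIV (H \<circ> tor)"
    and sub: "\<gamma> ` {t1<..<t2} \<subseteq> B" and t1: "0 \<le> t1" and t2: "t2 \<le> T"
  shows "\<exists>c. \<forall>t\<in>{t1<..<t2}. H (\<gamma> t) = c"
proof (cases "t1 < t2")
  case False
  then show ?thesis by auto
next
  case True
  have T0: "0 < T" using True t1 t2 by linarith
  have icd: "\<gamma> \<in> Gamma T \<and> (\<forall>t\<in>{0..T}. \<gamma> t = tadd (\<gamma> 0) (LINT \<tau>:{0..t}|lborel. b (\<gamma> \<tau>)))"
    using ic unfolding integral_curve_def by blast
  have gG: "\<gamma> \<in> Gamma T" using icd by (rule conjunct1)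
  have eq: "\<gamma> t = tadd (\<gamma> 0) (LINT \<tau>:{0..t}|lborel. b (\<gamma> \<tau>))" if "t\<in>{0..T}" for t
    using conjunct2[OF icd] that by (rule bspec)
  have gG2: "\<gamma> \<in> extensional {0..T} \<and> continuous_on {0..T} \<gamma> \<and> \<gamma> ` {0..T} \<subseteq> torus"
    using gG by (simp only: Gamma_def mem_Collect_eq)
  have gc: "continuous_on {0..T} \<gamma>" using gG2 by (simp only:)
  have gt: "\<gamma> ` {0..T} \<subseteq> torus" using gG2 by (simp only:)
  have gt2: "\<gamma> s \<in> torus" if "s \<in> {0..T}" for s using gt that by (rule subsetD[OF _ imageI])
  have "\<gamma> 0 \<in> torus" using T0 by (intro gt2) simp
  then obtain x0 where x0: "\<gamma> 0 = tor x0" unfolding torus_def by blast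
  define cl where "cl s = max 0 (min T s)" for s
  have clT: "cl s \<in> {0..T}" for s using T0 unfolding cl_def by auto
  have clid: "s \<in> {0..T} \<Longrightarrow> cl s = s" for s unfolding cl_def by auto
  have clc: "continuous_on UNIV cl" unfolding cl_def by (intro continuous_intros)
  define v where "v s = b (\<gamma> (cl s))" for s
  have gcc: "continuous_on UNIV (\<lambda>s. \<gamma> (cl s))"
    by (rule continuous_on_compose2[OF gc clc]) (use clT in auto)
  have vm: "v \<in> borel_measurable borel"
    unfolding v_def using measurable_compose[OF borel_measurable_continuous_onI[OF gcc] bm] by (simp add: o_def)
  have vb: "norm (v s) \<le> Mb" for s unfolding v_def by (intro bnd gt2 clT)
  have Mb0: "0 \<le> Mb" using vb[of 0] norm_ge_zero order_trans by blast
  have vL: "v \<in> borel_measurable (lebesgue_on S)" for S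
  proof -
    have "v \<in> borel_measurable lborel" using vm by simp
    then have "v \<in> borel_measurable lebesgue" by (rule measurable_completion)
    then show ?thesis by (rule measurable_restrict_space1)
  qed
  have vi: "v absolutely_integrable_on {u..w}" for u w
  proof (rule measurable_bounded_by_integrable_imp_absolutely_integrable[OF vL _ integrable_on_const[OF lmeasurable_interval(1)]])
    show "{u..w} \<in> sets lebesgue" using lmeasurable_interval(1)[of u w] by (rule fmeasurableD)
    show "norm (v x) \<le> Mb" for x by (rule vb)
  qed
  have vint: "v integrable_on {u..w}" for u w using vi by (simp add: absolutely_integrable_on_def)
  have LI: "(LINT \<tau>:{0..t}|lborel. b (\<gamma> \<tau>)) = integral {0..t} v" if t: "t \<in> {0..T}" for t
  proof -
    have "(LINT \<tau>:{0..t}|lborel. b (\<gamma> \<tau>)) = (LINT \<tau>:{0..t}|lborel. v \<tau>)"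
      by (rule set_lebesgue_integral_cong) (use t in \<open>auto simp: v_def clid\<close>)
    also have "\<dots> = integral {0..t} v"
    proof (rule set_borel_integral_eq_integral(2))
      show "set_integrable lborel {0..t} v"
        unfolding set_integrable_def
      proof (rule integrableI_bounded_set_indicator[where B=Mb])
        show "{0..t} \<in> sets lborel" by simp
        show "v \<in> borel_measurable lborel" using vm by simp
        show "emeasure lborel {0..t} < \<infinity>" using t by simp
        show "AE x in lborel. x \<in> {0..t} \<longrightarrow> norm (v x) \<le> Mb" using vb by simp
      qed
    qed
    finally show ?thesis .
  qed
  define c where "c s = x0 + integral {0..s} v" for s
  have ct: "\<gamma> t = tor (c t)" if "t \<in> {0..T}" for t
    using eq[OF that] LI[OF that] x0 by (simp add: tadd_tor c_def)
  have clip: "norm (c s' - c s) \<le> Mb * \<bar>s' - s\<bar>" if "0 \<le> s" "0 \<le> s'" for s s'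
  proof -
    have one: "norm (c w - c u) \<le> Mb * (w - u)" if "0 \<le> u" "u \<le> w" for u w
    proof -
      have "integral {0..u} v + integral {u..w} v = integral {0..w} v"
        by (rule Henstock_Kurzweil_Integration.integral_combine) (use that vint in auto)
      then have "c w - c u = integral {u..w} v" unfolding c_def by (simp add: algebra_simps)
      also have "norm \<dots> \<le> integral {u..w} (\<lambda>_. Mb)"
        by (rule integral_norm_bound_integral) (use vint vb in auto)
      also have "\<dots> = Mb * (w - u)" using that by simp
      finally show ?thesis .
    qed
    show ?thesis
    proof (cases "s \<le> s'")
      case True then show ?thesis using one[OF that(1) True] by simp
    next
      case False then show ?thesis using one[OF that(2), of s] by (simp add: norm_minus_commute)
    qed
  qed
  define f where "f t = H (\<gamma> t)" for t
  have fc: "f t = (H \<circ> tor) (c t)" if "t \<in> {0..T}" for t using ct[OF that] by (simp add: f_def)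
  have flip: "\<bar>f x - f y\<bar> \<le> (L * Mb) * \<bar>x - y\<bar>" if "x \<in> {t1<..<t2}" "y \<in> {t1<..<t2}" for x y
  proof -
    have xy: "x \<in> {0..T}" "y \<in> {0..T}" using that t1 t2 by auto
    have "\<bar>f x - f y\<bar> = dist ((H \<circ> tor) (c x)) ((H \<circ> tor) (c y))" using fc xy by (simp add: dist_real_def)
    also have "\<dots> \<le> L * dist (c x) (c y)" by (rule lipschitz_onD[OF Hlip]) auto
    also have "\<dots> \<le> L * (Mb * \<bar>x - y\<bar>)"
    proof (rule mult_left_mono)
      show "dist (c x) (c y) \<le> Mb * \<bar>x - y\<bar>" using clip[of y x] xy by (simp add: dist_norm)
      show "0 \<le> L" using Hlip by (rule lipschitz_on_nonneg)
    qed
    finally show ?thesis by simp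
  qed
  obtain Z where Z: "negligible Z" "\<And>t. t \<notin> Z \<Longrightarrow> (\<forall>\<epsilon>>0. \<exists>\<delta>>0. \<forall>d. 0<d \<and> d<\<delta> \<longrightarrow>
            integral (cball t d) (\<lambda>s. norm (v s - v t)) \<le> \<epsilon> * d)"
    using lebesgue_points[OF vm vb] by blast
  define Nt where "Nt = Z \<union> {t\<in>{0..T}. \<gamma> t \<in> A}"
  have Ntn: "negligible Nt" unfolding Nt_def using Z(1) negl by (rule negligible_Un)
  have der: "(f has_derivative (\<lambda>h. 0)) (at t)" if t: "t \<in> {t1<..<t2} - Nt" for t
  proof -
    have t0: "0 < t" "t < T" "t \<in> {0..T}" using t t1 t2 by auto
    have ni: "(\<lambda>s. norm (v s - v t)) integrable_on {u..w}" for u w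
    proof -
      have "(\<lambda>s. v s - v t) absolutely_integrable_on {u..w}"
      proof (rule measurable_bounded_by_integrable_imp_absolutely_integrable[OF _ _ integrable_on_const[OF lmeasurable_interval(1)]])
        show "(\<lambda>s. v s - v t) \<in> borel_measurable (lebesgue_on {u..w})"
          using vL by (intro borel_measurable_diff) simp_all
        show "norm (v s - v t) \<le> 2*Mb" for s
          using norm_triangle_ineq4[of "v s" "v t"] vb[of s] vb[of t] by simp
        show "{u..w} \<in> sets lebesgue" using lmeasurable_interval(1)[of u w] by (rule fmeasurableD)
      qed
      then show ?thesis by (simp add: absolutely_integrable_on_def)
    qed
    have "((\<lambda>s. integral {0..s} v) has_derivative (\<lambda>h. h *\<^sub>R v t)) (at t)"
      by (rule lp_deriv[OF vint ni Z(2) t0(1)]) (use t Nt_def in auto)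
    then have cd: "(c has_derivative (\<lambda>h. h *\<^sub>R v t)) (at t)"
      unfolding c_def using has_derivative_add_const[where c=x0] by (simp add: add.commute)
    have "t \<in> {t1<..<t2}" using t by blast
    then have "\<gamma> t \<in> B" using sub by blast
    then have inB: "tor (c t) \<in> B" using ct[OF t0(3)] by simp
    have ninA: "tor (c t) \<notin> A" using t ct[OF t0(3)] t0 unfolding Nt_def by auto
    obtain D where D: "((H \<circ> tor) has_derivative D) (at (c t))"
      "(- D (0, 1), D (1, 0)) = r (c t) *\<^sub>R b (tor (c t))"
      using good[OF inB ninA] by blast
    have vt: "v t = b (tor (c t))" unfolding v_def using clid[OF t0(3)] ct[OF t0(3)] by simp
    have "((H \<circ> tor) \<circ> c has_derivative D \<circ> (\<lambda>h. h *\<^sub>R v t)) (at t)"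
      by (rule diff_chain_at[OF cd D(1)])
    moreover have "D \<circ> (\<lambda>h. h *\<^sub>R v t) = (\<lambda>h. 0)"
    proof
      fix h :: real
      have lin: "linear D" using D(1) by (rule has_derivative_linear)
      obtain p q where pq: "v t = (p, q)" by force
      have bpq: "b (tor (c t)) = (p, q)" using vt pq by simp
      have "(- D (0, 1), D (1, 0)) = (r (c t) * p, r (c t) * q)" using D(2) unfolding bpq by simp
      then have "D (1, 0) = r (c t) * q" "D (0, 1) = - (r (c t) * p)" by auto
      then show "(D \<circ> (\<lambda>h. h *\<^sub>R v t)) h = 0"
        using lin2[OF lin, of "h * p" "h * q"] pq by (simp add: algebra_simps)
    qed
    ultimately have "((H \<circ> tor) \<circ> c has_derivative (\<lambda>h. 0)) (at t)" by simp
    then show ?thesis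
    proof (rule has_derivative_transform_within_open[where s="{0<..<T}"])
      show "open {0<..<T}" by simp
      show "t \<in> {0<..<T}" using t0 by simp
      fix s assume "s \<in> {0<..<T}"
      then show "((H \<circ> tor) \<circ> c) s = f s" using fc[of s] by simp
    qed
  qed
  show ?thesis using const_from_ae_deriv[OF flip Ntn der] unfolding f_def by blast
qed

lemma Arg_cis_shift: "\<exists>k::int. Arg (cis \<theta>) = \<theta> - of_int k * (2 * pi)"
proof -
  obtain k where "Im (\<i> * complex_of_real \<theta>) - of_int k * (2 * pi) = Arg (exp (\<i> * complex_of_real \<theta>))"
    using Arg_exp_diff_2pi by blast
  then show ?thesis by (metis cis_conv_exp Im_i_times Re_complex_of_real)
qed

definition hang :: "complex \<Rightarrow> real" where
  "hang w = (if w \<in> - \<real>\<^sub>\<le>\<^sub>0 then Arg w else pi)"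

lemma hang_meas: "hang \<in> borel_measurable borel"
  unfolding hang_def
proof (rule borel_measurable_continuous_on_if)
  show "- \<real>\<^sub>\<le>\<^sub>0 \<in> sets (borel :: complex measure)"
    by (intro borel_open open_Compl closed_nonpos_Reals_complex)
  show "continuous_on (- \<real>\<^sub>\<le>\<^sub>0) Arg"
    by (intro continuous_at_imp_continuous_on ballI continuous_at_Arg) auto
qed (rule continuous_on_const)

lemma hang_cis: "hang (cis \<theta>) = Arg (cis \<theta>)"
proof (cases "cis \<theta> \<in> \<real>\<^sub>\<le>\<^sub>0")
  case True
  then obtain r where r: "cis \<theta> = complex_of_real r" "r \<le> 0" unfolding nonpos_Reals_def by auto
  have "r \<noteq> 0" using r(1) by (metis cis_neq_zero of_real_0)
  then have "Arg (cis \<theta>) = pi" unfolding Arg_eq_pi using r by simp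
  then show ?thesis using True by (simp add: hang_def)
next
  case False then show ?thesis by (simp add: hang_def)
qed

definition gang :: "complex \<times> complex \<Rightarrow> real \<times> real" where
  "gang z = (hang (fst z) / (2*pi), hang (snd z) / (2*pi))"

lemma gang_meas: "gang \<in> borel_measurable borel"
proof -
  have f1: "(fst :: complex \<times> complex \<Rightarrow> complex) \<in> borel_measurable borel"
    by (intro borel_measurable_continuous_onI continuous_intros)
  have f2: "(snd :: complex \<times> complex \<Rightarrow> complex) \<in> borel_measurable borel"
    by (intro borel_measurable_continuous_onI continuous_intros)
  have "(\<lambda>z::complex \<times> complex. hang (fst z)) \<in> borel_measurable borel"
    using measurable_compose[OF f1 hang_meas] by (simp add: o_def)
  moreover have "(\<lambda>z::complex \<times> complex. hang (snd z)) \<in> borel_measurable borel"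
    using measurable_compose[OF f2 hang_meas] by (simp add: o_def)
  ultimately show ?thesis unfolding gang_def
    by (intro borel_measurable_Pair borel_measurable_divide) simp_all
qed

lemma gang_tor: "\<exists>i j. gang (tor x) = x - (real_of_int i, real_of_int j)"
proof -
  obtain i :: int where i: "Arg (cis (2 * pi * fst x)) = 2 * pi * fst x - of_int i * (2 * pi)"
    using Arg_cis_shift by blast
  obtain j :: int where j: "Arg (cis (2 * pi * snd x)) = 2 * pi * snd x - of_int j * (2 * pi)"
    using Arg_cis_shift by blast
  have "gang (tor x) = x - (real_of_int i, real_of_int j)"
    unfolding gang_def tor_def using i j by (simp add: hang_cis prod_eq_iff field_simps)
  then show ?thesis by blast
qed

theorem mainTheorem5:
  fixes T :: real
    and b :: "complex \<times> complex \<Rightarrow> real \<times> real"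
    and \<rho> \<rho>B :: "real \<Rightarrow> complex \<times> complex \<Rightarrow> real"
    and \<eta> :: "(real \<Rightarrow> complex \<times> complex) measure"
    and B :: "(complex \<times> complex) set"
    and H :: "complex \<times> complex \<Rightarrow> real"
    and t1 t2 :: real
  assumes T_pos: "T > 0"
    and b_borel: "b \<in> borel_measurable borel"
    and b_bdd: "bounded (b ` torus)"
    and b_BV: "BV_torus b"
    and b_ni: "nearly_incompressible T b \<rho>"
    and \<eta>_fin: "finite_measure \<eta>"
    and \<eta>_sets: "sets \<eta> = sets (Gamma_M T)"
    and \<eta>_conc: "AE \<gamma> in \<eta>. integral_curve b T \<gamma>"
    and \<eta>_marg: "\<forall>t\<in>{0..T}. distr \<eta> borel (\<lambda>\<gamma>. \<gamma> t) = density tleb (\<lambda>x. ennreal (\<rho> t x))"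
    and B_in: "B \<in> ratballs"
    and \<rho>B_meas: "(\<lambda>(t, x). \<rho>B t x) \<in> borel_measurable borel"
    and \<rho>B_nonneg: "\<forall>t x. \<rho>B t x \<ge> 0"
    and \<rho>B_marg: "\<forall>t\<in>{0..T}. distr (density \<eta> (indicator (TB b T B))) borel (\<lambda>\<gamma>. \<gamma> t)
                                = density tleb (\<lambda>x. ennreal (\<rho>B t x))"
    and H_lip: "\<exists>L. L-lipschitz_on UNIV (H \<circ> tor)"
    and H_grad: "AE x in lborel. tor x \<in> B \<longrightarrow>
                   (\<exists>D. ((H \<circ> tor) has_derivative D) (at x) \<and>
                        (- D (0, 1), D (1, 0)) = (LINT t:{0..T}|lborel. \<rho>B t (tor x)) *\<^sub>R b (tor x))"
    and t1: "t1 \<in> {0..T}" and t2: "t2 \<in> {0..T}"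
  shows "AE \<gamma> in \<eta>. (\<gamma> \<in> Gamma T \<and> \<gamma> ` {t1<..<t2} \<subseteq> B) \<longrightarrow>
           (\<exists>c. \<forall>t\<in>{t1<..<t2}. H (\<gamma> t) = c)"
proof -
  have spc: "space \<eta> = Gamma T"
  proof -
    have "space \<eta> = space (Gamma_M T)" by (rule sets_eq_imp_space_eq[OF \<eta>_sets])
    also have "\<dots> = Gamma T \<inter> (\<Pi>\<^sub>E i\<in>{0..T}. UNIV)"
      unfolding Gamma_M_def by (simp add: space_restrict_space space_PiM)
    also have "\<dots> = Gamma T" unfolding Gamma_def by (auto simp: PiE_def)
    finally show ?thesis .
  qed
  have meas: "(\<lambda>\<gamma>. \<gamma> s) \<in> measurable \<eta> borel" if s: "s \<in> {0..T}" for s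
  proof -
    have "(\<lambda>\<gamma>. \<gamma> s) \<in> measurable (Pi\<^sub>M {0..T} (\<lambda>_. borel)) borel"
      by (rule measurable_component_singleton[OF s])
    then have "(\<lambda>\<gamma>. \<gamma> s) \<in> measurable (Gamma_M T) borel"
      unfolding Gamma_M_def by (rule measurable_restrict_space1)
    then show ?thesis by (subst measurable_cong_sets[OF \<eta>_sets refl])
  qed
  have sf: "sigma_finite_measure \<eta>" using \<eta>_fin unfolding finite_measure_def by blast
  define P where "P x = (tor x \<in> B \<longrightarrow>
                   (\<exists>D. ((H \<circ> tor) has_derivative D) (at x) \<and>
                        (- D (0, 1), D (1, 0)) = (LINT t:{0..T}|lborel. \<rho>B t (tor x)) *\<^sub>R b (tor x)))" for x
  have "AE x in lborel. P x" using H_grad unfolding P_def by simp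
  then obtain N where N: "{x \<in> space lborel. \<not> P x} \<subseteq> N" "emeasure lborel N = 0" "N \<in> sets lborel"
    by (rule AE_E)
  define ZZ where "ZZ = (\<lambda>(i,j). (real_of_int i, real_of_int j)) ` (UNIV :: (int \<times> int) set)"
  have ZZc: "countable ZZ" unfolding ZZ_def by simp
  have ZZneg: "-k \<in> ZZ" if kZ: "k \<in> ZZ" for k
  proof -
    obtain i j where "k = (real_of_int i, real_of_int j)" using kZ unfolding ZZ_def by auto
    then have "-k = (\<lambda>(i,j). (real_of_int i, real_of_int j)) (-i, -j)" by simp
    then show ?thesis unfolding ZZ_def by (rule image_eqI) simp
  qed
  have ZZadd: "k + k' \<in> ZZ" if kZ: "k \<in> ZZ" "k' \<in> ZZ" for k k'
  proof -
    obtain i j where "k = (real_of_int i, real_of_int j)" using kZ(1) unfolding ZZ_def by auto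
    moreover obtain i' j' where "k' = (real_of_int i', real_of_int j')" using kZ(2) unfolding ZZ_def by auto
    ultimately have "k + k' = (\<lambda>(i,j). (real_of_int i, real_of_int j)) (i + i', j + j')" by simp
    then show ?thesis unfolding ZZ_def by (rule image_eqI) simp
  qed
  define N' where "N' = (\<Union>k\<in>ZZ. (\<lambda>y. y + k) -` N)"
  have Nnull: "N \<in> null_sets lborel" using N by (simp add: null_sets_def)
  have N'null: "N' \<in> null_sets lborel" unfolding N'_def
  proof (rule null_sets_UN'[OF ZZc])
    fix k :: "real \<times> real"
    have m: "((+) k) \<in> measurable lborel borel" by simp
    have fe: "(\<lambda>y. y + k) = (+) k" by (rule ext) (simp add: add.commute)
    have "emeasure lborel ((\<lambda>y. y + k) -` N) = emeasure (distr lborel borel ((+) k)) N"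
      using emeasure_distr[OF m, of N] N(3) unfolding fe by simp
    also have "\<dots> = 0" using N(2) by (simp add: lborel_distr_plus)
    finally have "emeasure lborel ((\<lambda>y. y + k) -` N) = 0" .
    moreover have "(\<lambda>y. y + k) -` N \<in> sets lborel"
      using measurable_sets[OF m, of N] N(3) unfolding fe by simp
    ultimately show "(\<lambda>y. y + k) -` N \<in> null_sets lborel" by (simp add: null_sets_def)
  qed
  have N'shift: "x \<in> N'" if xk: "x - k \<in> N'" "k \<in> ZZ" for x k
  proof -
    obtain k' where "k' \<in> ZZ" "x - k + k' \<in> N" using xk(1) unfolding N'_def by auto
    then have "x + (k' - k) \<in> N" by (simp add: algebra_simps)
    moreover have "k' - k \<in> ZZ" using ZZadd[OF \<open>k' \<in> ZZ\<close> ZZneg[OF xk(2)]] by simp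
    ultimately show ?thesis unfolding N'_def by blast
  qed
  have gtZ: "\<exists>k\<in>ZZ. gang (tor x) = x - k" for x
  proof -
    obtain i j where ij: "gang (tor x) = x - (real_of_int i, real_of_int j)" using gang_tor[of x] by blast
    have "(real_of_int i, real_of_int j) \<in> ZZ" unfolding ZZ_def by (rule image_eqI[of _ _ "(i,j)"]) simp_all
    then show ?thesis using ij by blast
  qed
  define A where "A = gang -` N'"
  have Ab: "A \<in> sets borel"
  proof -
    have "N' \<in> sets lborel" using N'null by (rule null_setsD2)
    then have "N' \<in> sets borel" by simp
    then show ?thesis unfolding A_def by (rule measurable_sets_borel[OF gang_meas])
  qed
  have good: "\<exists>D. ((H \<circ> tor) has_derivative D) (at x) \<and>
                 (- D (0, 1), D (1, 0)) = (LINT t:{0..T}|lborel. \<rho>B t (tor x)) *\<^sub>R b (tor x)"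
    if tx: "tor x \<in> B" "tor x \<notin> A" for x
  proof (rule ccontr)
    assume c: "\<not> ?thesis"
    then have "\<not> P x" using tx(1) unfolding P_def by blast
    then have "x \<in> N" using N(1) by auto
    obtain k where k: "k \<in> ZZ" "gang (tor x) = x - k" using gtZ by blast
    have "x - k + k \<in> N" using \<open>x \<in> N\<close> by simp
    then have "gang (tor x) \<in> N'" unfolding N'_def k(2) using k(1) by blast
    then show False using tx(2) unfolding A_def by simp
  qed
  have tlebA: "emeasure tleb A = 0"
  proof -
    define R where "R = ({0..<1} \<times> {0..<1} :: (real \<times> real) set)"
    have torm: "tor \<in> measurable (restrict_space lborel R) borel"
    proof -
      have "continuous_on UNIV tor" unfolding tor_def by (intro continuous_intros)
      then have "tor \<in> borel_measurable borel" by (rule borel_measurable_continuous_onI)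
      then have "tor \<in> borel_measurable lborel" by simp
      then show ?thesis by (rule measurable_restrict_space1)
    qed
    have "emeasure tleb A = emeasure (restrict_space lborel R) (tor -` A \<inter> space (restrict_space lborel R))"
      unfolding tleb_def R_def[symmetric] by (rule emeasure_distr[OF torm Ab])
    also have "\<dots> = emeasure lborel (tor -` A \<inter> R)"
    proof -
      have Rs: "R \<in> sets lborel" unfolding R_def sets_lborel
        by (subst borel_prod[symmetric]) (rule pair_measureI; simp)
      have "space (restrict_space lborel R) = R" using Rs by simp
      then show ?thesis using Rs by (simp add: emeasure_restrict_space)
    qed
    also have "\<dots> \<le> emeasure lborel N'"
    proof (rule emeasure_mono)
      show "tor -` A \<inter> R \<subseteq> N'"
      proof
        fix x assume "x \<in> tor -` A \<inter> R"
        then have "gang (tor x) \<in> N'" unfolding A_def by simp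
        moreover obtain k where "k \<in> ZZ" "gang (tor x) = x - k" using gtZ by blast
        ultimately show "x \<in> N'" using N'shift by simp
      qed
    qed (use null_setsD2[OF N'null] in simp)
    also have "\<dots> = 0" using N'null by (simp add: null_sets_def)
    finally show ?thesis by simp
  qed
  have margnull: "emeasure \<eta> {\<gamma>\<in>space \<eta>. \<gamma> s \<in> A} = 0" if s: "s \<in> {0..T}" for s
  proof -
    have "emeasure \<eta> {\<gamma>\<in>space \<eta>. \<gamma> s \<in> A} = emeasure (distr \<eta> borel (\<lambda>\<gamma>. \<gamma> s)) A"
      by (subst emeasure_distr[OF meas[OF s] Ab]) (auto intro: arg_cong[where f="emeasure \<eta>"])
    also have "\<dots> = emeasure (density tleb (\<lambda>x. ennreal (\<rho> s x))) A" using \<eta>_marg s by simp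
    also have "\<dots> = 0"
    proof -
      have sets_tleb: "sets tleb = sets borel" unfolding tleb_def by simp
      have rm: "(\<lambda>(t, x). \<rho> t x) \<in> borel_measurable borel" using b_ni unfolding nearly_incompressible_def by blast
      have pm: "(\<lambda>x::complex\<times>complex. (s, x)) \<in> borel_measurable borel"
        by (intro borel_measurable_continuous_onI continuous_intros)
      have "(\<lambda>x. \<rho> s x) \<in> borel_measurable borel"
        using measurable_compose[OF pm rm] by (simp add: o_def)
      then have "(\<lambda>x. ennreal (\<rho> s x)) \<in> borel_measurable borel" by simp
      then have "(\<lambda>x. ennreal (\<rho> s x)) \<in> borel_measurable tleb"
        by (subst measurable_cong_sets[OF sets_tleb refl])
      moreover have "A \<in> sets tleb" using Ab sets_tleb by simp
      ultimately have "emeasure (density tleb (\<lambda>x. ennreal (\<rho> s x))) A = (\<integral>\<^sup>+ x. ennreal (\<rho> s x) * indicator A x \<partial>tleb)"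
        by (rule emeasure_density)
      also have "\<dots> = 0"
        by (rule nn_integral_null_set) (use tlebA \<open>A \<in> sets tleb\<close> in \<open>simp add: null_sets_def\<close>)
      finally show ?thesis .
    qed
    finally show ?thesis .
  qed
  have cont: "continuous_on {0..T} \<gamma>" if "\<gamma> \<in> space \<eta>" for \<gamma>
    using that spc unfolding Gamma_def by auto
  have AEneg: "AE \<gamma> in \<eta>. negligible {t\<in>{0..T}. \<gamma> t \<in> A}"
    by (rule path_null[OF sf cont meas Ab margnull]) (use T_pos in auto)
  obtain Mb where Mb: "\<And>z. z \<in> torus \<Longrightarrow> norm (b z) \<le> Mb"
    using b_bdd unfolding bounded_iff by blast
  obtain L where L: "L-lipschitz_on UNIV (H \<circ> tor)" using H_lip by blast
  show ?thesis
    using \<eta>_conc AEneg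
  proof (rule AE_mp[OF _ AE_mp[OF _ AE_I2]])
    fix \<gamma> assume "\<gamma> \<in> space \<eta>"
    show "negligible {t\<in>{0..T}. \<gamma> t \<in> A} \<longrightarrow> integral_curve b T \<gamma> \<longrightarrow>
          (\<gamma> \<in> Gamma T \<and> \<gamma> ` {t1<..<t2} \<subseteq> B) \<longrightarrow> (\<exists>c. \<forall>t\<in>{t1<..<t2}. H (\<gamma> t) = c)"
    proof (intro impI)
      assume ng: "negligible {t\<in>{0..T}. \<gamma> t \<in> A}" and ic: "integral_curve b T \<gamma>"
        and h: "\<gamma> \<in> Gamma T \<and> \<gamma> ` {t1<..<t2} \<subseteq> B"
      show "\<exists>c. \<forall>t\<in>{t1<..<t2}. H (\<gamma> t) = c"
        by (rule curve_const[OF ic b_borel Mb ng good L]) (use h t1 t2 in auto)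
    qed
  qed
qed

end
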